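(* Let $V$ be a finite nonempty set, $c\in\mathbb{R}^{P_V}$, $\hat x$ a maximally specific partial function on $P_V$, $U\subseteq V$, and $ij\in (U\times(V\setminus U))\setminus\operatorname{dom}(\hat x)$. If $(U\times(V\setminus U))\cap\hat x^{-1}(1)=\emptyset$ and $$c_{ij}^-\ \ge \sum_{pq\in (U\times(V\setminus U))\setminus\hat x^{-1}(0)} c_{pq}^+,$$ then there is a maximizer $x^*$ of $\varphi_c$ over $X_V[\hat x]$ with $x^*_{ij}=0$.
   Context: $P_V=\{pq\in V^2\mid p\neq q\}$; $X_V$ is the set of $x\in\{0,1\}^{P_V}$ with $x_{pq}+x_{qr}-x_{pr}\le 1$ for all pairwise distinct $p,q,r\in V$; $\varphi_c(x)=\sum_{pq\in P_V}c_{pq}x_{pq}$. A partial function $\tilde x$ is a map from $\operatorname{dom}(\tilde x)\subseteq P_V$ to $\{0,1\}$, $\tilde x^{-1}(b)$ the pairs mapped to $b$, and $X_V[\tilde x]=\{x\in X_V\mid x_{pq}=\tilde x_{pq}\ \forall pq\in\operatorname{dom}(\tilde x)\}$. A pair $pq$ is decided if $x_{pq}=x'_{pq}$ for all $x,x'\in X_V[\tilde x]$; $\tilde x$ is maximally specific if $X_V[\tilde x]\ne\emptyset$ and the decided pairs are exactly $\operatorname{dom}(\tilde x)$. For real $a$: $a^+=\max(a,0)$, $a^-=\max(-a,0)$. *)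

theory Defs
  imports Main "HOL-Library.Extended_Real" Complex_Main
begin

definition PV :: "'a set \<Rightarrow> ('a \<times> 'a) set" where
  "PV V = {(p, q). p \<in> V \<and> q \<in> V \<and> p \<noteq> q}"

text \<open>Feasible 0/1 vectors in {0,1}^{P_V}; represented as functions that are 0 outside P_V.\<close>
definition XV :: "'a set \<Rightarrow> (('a \<times> 'a) \<Rightarrow> int) set" where
  "XV V = {x. (\<forall>pq \<in> PV V. x pq \<in> {0, 1}) \<and> (\<forall>pq. pq \<notin> PV V \<longrightarrow> x pq = 0) \<and>
     (\<forall>p\<in>V. \<forall>q\<in>V. \<forall>r\<in>V. p \<noteq> q \<and> q \<noteq> r \<and> p \<noteq> r \<longrightarrow>
        x (p, q) + x (q, r) - x (p, r) \<le> 1)}"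

definition phi :: "(('a \<times> 'a) \<Rightarrow> real) \<Rightarrow> 'a set \<Rightarrow> (('a \<times> 'a) \<Rightarrow> int) \<Rightarrow> real" where
  "phi c V x = (\<Sum>pq \<in> PV V. c pq * real_of_int (x pq))"

definition is_partial :: "'a set \<Rightarrow> (('a \<times> 'a) \<rightharpoonup> int) \<Rightarrow> bool" where
  "is_partial V xt \<longleftrightarrow> dom xt \<subseteq> PV V \<and> ran xt \<subseteq> {0, 1}"

definition preim :: "(('a \<times> 'a) \<rightharpoonup> int) \<Rightarrow> int \<Rightarrow> ('a \<times> 'a) set" where
  "preim xt b = {pq. xt pq = Some b}"

definition XV_restr :: "'a set \<Rightarrow> (('a \<times> 'a) \<rightharpoonup> int) \<Rightarrow> (('a \<times> 'a) \<Rightarrow> int) set" where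
  "XV_restr V xt = {x \<in> XV V. \<forall>pq \<in> dom xt. Some (x pq) = xt pq}"

definition decided :: "'a set \<Rightarrow> (('a \<times> 'a) \<rightharpoonup> int) \<Rightarrow> ('a \<times> 'a) \<Rightarrow> bool" where
  "decided V xt pq \<longleftrightarrow> (\<forall>x \<in> XV_restr V xt. \<forall>x' \<in> XV_restr V xt. x pq = x' pq)"

definition maximally_specific :: "'a set \<Rightarrow> (('a \<times> 'a) \<rightharpoonup> int) \<Rightarrow> bool" where
  "maximally_specific V xt \<longleftrightarrow> XV_restr V xt \<noteq> {} \<and>
     {pq \<in> PV V. decided V xt pq} = dom xt"

definition pospart :: "real \<Rightarrow> real" where "pospart a = max a 0"
definition negpart :: "real \<Rightarrow> real" where "negpart a = max (- a) 0"

end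

theory Submission
  imports Defs
begin

lemma XV_finite:
  assumes "finite V"
  shows "finite (XV V)"
proof (rule inj_on_finite[where f="\<lambda>x. {pq \<in> PV V. x pq = 1}" and B="Pow (PV V)"])
  show "inj_on (\<lambda>x. {pq \<in> PV V. x pq = 1}) (XV V)"
  proof (rule inj_onI)
    fix x y assume x: "x \<in> XV V" and y: "y \<in> XV V"
      and e: "{pq \<in> PV V. x pq = 1} = {pq \<in> PV V. y pq = 1}"
    show "x = y"
    proof
      fix pq show "x pq = y pq"
      proof (cases "pq \<in> PV V")
        case True
        then have "x pq \<in> {0,1}" "y pq \<in> {0,1}" using x y unfolding XV_def by auto
        moreover have "x pq = 1 \<longleftrightarrow> y pq = 1" using e True by blast
        ultimately show ?thesis by auto
      next
        case False
        have "x pq = 0" "y pq = 0" using x y False unfolding XV_def by (auto simp del: split_paired_All)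
        then show ?thesis by simp
      qed
    qed
  qed
  show "(\<lambda>x. {pq \<in> PV V. x pq = 1}) ` XV V \<subseteq> Pow (PV V)" by auto
  have "PV V \<subseteq> V \<times> V" unfolding PV_def by auto
  then show "finite (Pow (PV V))" using assms by (simp add: finite_subset)
qed

theorem proposition6p2:
  fixes V U :: "'a set" and c :: "('a \<times> 'a) \<Rightarrow> real"
    and xh :: "('a \<times> 'a) \<rightharpoonup> int" and i j :: 'a
  assumes "finite V" and "V \<noteq> {}"
    and "is_partial V xh" and "maximally_specific V xh"
    and "U \<subseteq> V"
    and "(i, j) \<in> (U \<times> (V - U)) - dom xh"
    and "(U \<times> (V - U)) \<inter> preim xh 1 = {}"
    and "negpart (c (i, j)) \<ge> (\<Sum>pq \<in> (U \<times> (V - U)) - preim xh 0. pospart (c pq))"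
  shows "\<exists>xs \<in> XV_restr V xh. (\<forall>x \<in> XV_restr V xh. phi c V x \<le> phi c V xs) \<and> xs (i, j) = 0"
proof -
  let ?S = "XV_restr V xh"
  let ?C = "U \<times> (V - U)"
  have finS: "finite ?S" using XV_finite[OF assms(1)] unfolding XV_restr_def by auto
  have neS: "?S \<noteq> {}" using assms(4) unfolding maximally_specific_def by auto
  have "Max (phi c V ` ?S) \<in> phi c V ` ?S" using finS neS by simp
  then obtain x where xS: "x \<in> ?S" and xm: "phi c V x = Max (phi c V ` ?S)" by auto
  have xmax: "\<forall>y \<in> ?S. phi c V y \<le> phi c V x" using xm finS by simp
  show ?thesis
  proof (cases "x (i, j) = 0")
    case True then show ?thesis using xS xmax by blast
  next
    case False
    define x' where "x' = (\<lambda>pq. if pq \<in> ?C then 0 else x pq)"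
    have xX: "x \<in> XV V" and xd: "\<forall>pq \<in> dom xh. Some (x pq) = xh pq" using xS unfolding XV_restr_def by auto
    have x'X: "x' \<in> XV V"
      unfolding XV_def
    proof (intro CollectI conjI ballI allI impI)
      fix pq assume "pq \<in> PV V" then show "x' pq \<in> {0,1}" using xX unfolding XV_def x'_def by auto
    next
      fix pq assume "pq \<notin> PV V" then show "x' pq = 0" using xX unfolding XV_def x'_def by (auto simp del: split_paired_All)
    next
      fix p q r assume pqr: "p \<in> V" "q \<in> V" "r \<in> V" "p \<noteq> q \<and> q \<noteq> r \<and> p \<noteq> r"
      have t: "x (p, q) + x (q, r) - x (p, r) \<le> 1" using xX pqr unfolding XV_def by blast
      have b: "x (p,q) \<in> {0,1}" "x (q,r) \<in> {0,1}" "x (p,r) \<in> {0,1}"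
        using xX pqr unfolding XV_def PV_def by auto
      show "x' (p, q) + x' (q, r) - x' (p, r) \<le> 1"
        using t b pqr unfolding x'_def by auto
    qed
    have x'd: "\<forall>pq \<in> dom xh. Some (x' pq) = xh pq"
    proof
      fix pq assume pd: "pq \<in> dom xh"
      show "Some (x' pq) = xh pq"
      proof (cases "pq \<in> ?C")
        case True
        obtain b where b: "xh pq = Some b" using pd by auto
        have "b \<in> ran xh" using b by (rule ranI)
        then have "b \<in> {0,1}" using assms(3) unfolding is_partial_def by blast
        moreover have "b \<noteq> 1" using assms(7) True b unfolding preim_def by auto
        ultimately show ?thesis using True b unfolding x'_def by auto
      next
        case False then show ?thesis using xd pd unfolding x'_def by auto
      qed
    qed
    have x'S: "x' \<in> ?S" using x'X x'd unfolding XV_restr_def by auto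
    have x'ij: "x' (i, j) = 0" using assms(6) unfolding x'_def by auto
    have CPV: "?C \<subseteq> PV V" using assms(5) unfolding PV_def by auto
    have finPV: "finite (PV V)"
      using assms(1) finite_subset[of "PV V" "V \<times> V"] unfolding PV_def by auto
    have finC: "finite ?C" using CPV finPV finite_subset by blast
    have split: "phi c V z = (\<Sum>pq \<in> ?C. c pq * real_of_int (z pq)) + (\<Sum>pq \<in> PV V - ?C. c pq * real_of_int (z pq))" for z
      unfolding phi_def using sum.subset_diff[OF CPV finPV] by (simp add: add.commute)
    have rest: "(\<Sum>pq \<in> PV V - ?C. c pq * real_of_int (x' pq)) = (\<Sum>pq \<in> PV V - ?C. c pq * real_of_int (x pq))"
      unfolding x'_def by (rule sum.cong) auto
    have zero: "(\<Sum>pq \<in> ?C. c pq * real_of_int (x' pq)) = 0" unfolding x'_def by simp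
    let ?D = "?C - preim xh 0"
    have Dsub: "?D \<subseteq> ?C" by auto
    have finD: "finite ?D" using finC by auto
    have outD: "x pq = 0" if "pq \<in> ?C" "pq \<notin> ?D" for pq
    proof -
      have "xh pq = Some 0" using that unfolding preim_def by auto
      then show ?thesis using xd by (metis domI option.inject)
    qed
    have cutx: "(\<Sum>pq \<in> ?C. c pq * real_of_int (x pq)) = (\<Sum>pq \<in> ?D. c pq * real_of_int (x pq))"
      by (rule sum.mono_neutral_right[OF finC Dsub]) (auto simp: outD)
    have ijD: "(i,j) \<in> ?D" using assms(6) unfolding preim_def by auto
    have xij1: "x (i,j) = 1" using False xX CPV assms(6) unfolding XV_def by auto
    have bnd: "c pq * real_of_int (x pq) \<le> pospart (c pq)" if "pq \<in> ?D" for pq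
    proof -
      have "x pq \<in> {0,1}" using xX CPV that unfolding XV_def by auto
      then show ?thesis unfolding pospart_def by auto
    qed
    have "(\<Sum>pq \<in> ?D. c pq * real_of_int (x pq)) = c (i,j) + (\<Sum>pq \<in> ?D - {(i,j)}. c pq * real_of_int (x pq))"
      using sum.remove[OF finD ijD, of "\<lambda>pq. c pq * real_of_int (x pq)"] xij1 by simp
    also have "(\<Sum>pq \<in> ?D - {(i,j)}. c pq * real_of_int (x pq)) \<le> (\<Sum>pq \<in> ?D - {(i,j)}. pospart (c pq))"
      by (rule sum_mono) (auto intro: bnd)
    also have "(\<Sum>pq \<in> ?D - {(i,j)}. pospart (c pq)) = (\<Sum>pq \<in> ?D. pospart (c pq)) - pospart (c (i,j))"
      using sum.remove[OF finD ijD, of "\<lambda>pq. pospart (c pq)"] by simp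
    finally have "(\<Sum>pq \<in> ?D. c pq * real_of_int (x pq)) \<le> c (i,j) + (\<Sum>pq \<in> ?D. pospart (c pq)) - pospart (c (i,j))"
      by simp
    also have "\<dots> \<le> 0" using assms(8) unfolding pospart_def negpart_def by auto
    finally have "phi c V x \<le> phi c V x'"
      using split[of x] split[of x'] rest zero cutx by linarith
    then have "\<forall>y \<in> ?S. phi c V y \<le> phi c V x'" using xmax by (meson order_trans)
    then show ?thesis using x'S x'ij by blast
  qed
qed

end
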